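(* There is an absolute constant $A \geq 1$ such that the following holds. Let $L = \{(ay+b,y,\tfrac{1}{2}by+c) : y \in \mathbb{R}\}$ with $a,b,c \in \mathbb{R}$ be a horizontal line, and define $i_{L}(x,y,t) := (ay+b,y,\tfrac{1}{2}by+c)$. Then $$d((x,y,t),i_{L}(x,y,t)) \leq A(1+|a|)\operatorname{dist}((x,y,t),L), \qquad (x,y,t) \in \mathbb{H}.$$
   Context: $\mathbb{H}$ is $\mathbb{R}^{3}$ with group law $(x_{1},y_{1},t_{1}) \cdot (x_{2},y_{2},t_{2}) = (x_{1}+x_{2},y_{1}+y_{2},t_{1}+t_{2}+\tfrac{1}{2}(x_{1}y_{2}-x_{2}y_{1}))$ and metric $d(p,q) = \|q^{-1}\cdot p\|$ with $\|(x,y,t)\| = \max\{\sqrt{x^{2}+y^{2}},\sqrt{|t|}\}$; $\operatorname{dist}$ is w.r.t. $d$. *)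

theory Defs
  imports "HOL-Analysis.Analysis"
begin

type_synonym heis = "real \<times> real \<times> real"

definition heis_mult :: "heis \<Rightarrow> heis \<Rightarrow> heis" where
  "heis_mult p q = (case p of (x1,y1,t1) \<Rightarrow> case q of (x2,y2,t2) \<Rightarrow>
     (x1+x2, y1+y2, t1+t2 + (1/2)*(x1*y2 - x2*y1)))"

definition heis_inv :: "heis \<Rightarrow> heis" where
  "heis_inv p = (case p of (x,y,t) \<Rightarrow> (-x,-y,-t))"

definition heis_norm :: "heis \<Rightarrow> real" where
  "heis_norm p = (case p of (x,y,t) \<Rightarrow> max (sqrt (x^2+y^2)) (sqrt \<bar>t\<bar>))"

definition heis_d :: "heis \<Rightarrow> heis \<Rightarrow> real" where
  "heis_d p q = heis_norm (heis_mult (heis_inv q) p)"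

definition heis_dist_set :: "heis \<Rightarrow> heis set \<Rightarrow> real" where
  "heis_dist_set p S = Inf (heis_d p ` S)"

definition hline :: "real \<Rightarrow> real \<Rightarrow> real \<Rightarrow> heis set" where
  "hline a b c = {(a*y+b, y, (1/2)*b*y + c) | y. True}"

definition iL :: "real \<Rightarrow> real \<Rightarrow> real \<Rightarrow> heis \<Rightarrow> heis" where
  "iL a b c p = (case p of (x,y,t) \<Rightarrow> (a*y+b, y, (1/2)*b*y + c))"

end

theory Submission
  imports Defs
begin

lemma dist_iL:
  "heis_d (x,y,t) (iL a b c (x,y,t)) =
   max \<bar>x - a*y - b\<bar> (sqrt \<bar>t - c - b*y/2 + (x - a*y - b)*y/2\<bar>)"
proof -
  have "heis_d (x,y,t) (iL a b c (x,y,t)) = max \<bar>- (a * y) - b + x\<bar>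
      (sqrt \<bar>- (b * y / 2) - c + t + ((- (a * y) - b) * y + x * y) / 2\<bar>)"
    by (simp add: heis_d_def iL_def heis_mult_def heis_inv_def heis_norm_def)
  also have "- (b * y / 2) - c + t + ((- (a * y) - b) * y + x * y) / 2 = t - c - b*y/2 + (x - a*y - b)*y/2"
    by (simp add: field_simps)
  also have "- (a * y) - b + x = x - a*y - b" by simp
  finally show ?thesis .
qed

lemma dist_L:
  "heis_d (x,y,t) (a*w+b, w, (1/2)*b*w + c) =
   max (sqrt ((x - a*w - b)^2 + (y-w)^2)) (sqrt \<bar>t - c - b*y/2 + (x - a*y - b)*y/2 - (y-w)*(x-a*y-b)/2\<bar>)"
proof -
  have "heis_d (x,y,t) (a*w+b, w, (1/2)*b*w + c) = max (sqrt ((- (a * w) - b + x)^2 + (y - w)^2))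
      (sqrt \<bar>- (b * w / 2) - c + t + ((- (a * w) - b) * y + x * w) / 2\<bar>)"
    by (simp add: heis_d_def heis_mult_def heis_inv_def heis_norm_def)
  also have "- (b * w / 2) - c + t + ((- (a * w) - b) * y + x * w) / 2 = t - c - b*y/2 + (x - a*y - b)*y/2 - (y-w)*(x-a*y-b)/2"
    by (simp add: field_simps)
  also have "- (a * w) - b + x = x - a*w - b" by simp
  finally show ?thesis .
qed

lemma core:
  fixes u h T a D :: real
  assumes D1: "sqrt ((u + a*h)^2 + h^2) \<le> D" and D2: "sqrt \<bar>T - h*u/2\<bar> \<le> D"
  shows "max \<bar>u\<bar> (sqrt \<bar>T\<bar>) \<le> 2 * (1 + \<bar>a\<bar>) * D"
proof -
  have "sqrt (h^2) \<le> sqrt ((u + a*h)^2 + h^2)" by (rule real_sqrt_le_mono) simp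
  moreover have "sqrt (h^2) = \<bar>h\<bar>" by (rule real_sqrt_abs)
  ultimately have h1: "\<bar>h\<bar> \<le> D" using D1 by linarith
  have "sqrt ((u + a*h)^2) \<le> sqrt ((u + a*h)^2 + h^2)" by (rule real_sqrt_le_mono) simp
  moreover have "sqrt ((u + a*h)^2) = \<bar>u + a*h\<bar>" by (rule real_sqrt_abs)
  ultimately have h2: "\<bar>u + a*h\<bar> \<le> D" using D1 by linarith
  have D0: "0 \<le> D" using h1 by linarith
  have "\<bar>a*h\<bar> \<le> \<bar>a\<bar> * D" using h1 by (simp add: abs_mult mult_left_mono)
  hence hu: "\<bar>u\<bar> \<le> (1 + \<bar>a\<bar>) * D" using h2 by (simp add: algebra_simps)
  have T1: "\<bar>T - h*u/2\<bar> \<le> D^2" using D2 D0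
    by (metis abs_ge_zero real_sqrt_le_iff real_sqrt_abs real_sqrt_pow2 sqrt_le_D)
  have "\<bar>h*u\<bar> \<le> D * ((1 + \<bar>a\<bar>) * D)" unfolding abs_mult
    using h1 hu by (intro mult_mono) auto
  hence "\<bar>T\<bar> \<le> D^2 + D * ((1 + \<bar>a\<bar>) * D) / 2" using T1 by (simp add: abs_le_iff power2_eq_square) 
  also have "\<dots> \<le> (2 * (1 + \<bar>a\<bar>) * D)^2"
  proof -
    have "D^2 * (1 + (1+\<bar>a\<bar>)/2) \<le> D^2 * (4*(1+\<bar>a\<bar>)^2)"
      by (intro mult_left_mono) (auto simp: power2_eq_square algebra_simps)
    thus ?thesis by (simp add: power2_eq_square algebra_simps)
  qed
  finally have "sqrt \<bar>T\<bar> \<le> 2 * (1 + \<bar>a\<bar>) * D"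
    using D0 by (simp add: real_le_lsqrt real_sqrt_le_iff)
  moreover have "\<bar>u\<bar> \<le> 2 * (1 + \<bar>a\<bar>) * D" using hu D0
    by (smt (verit) mult_right_mono abs_ge_zero)
  ultimately show ?thesis by simp
qed

theorem lemma4p12:
  shows "\<exists>A::real. A \<ge> 1 \<and> (\<forall>a b c x y t::real.
     heis_d (x,y,t) (iL a b c (x,y,t)) \<le> A * (1 + \<bar>a\<bar>) * heis_dist_set (x,y,t) (hline a b c))"
proof (intro exI[of _ 2] conjI allI)
  show "(1::real) \<le> 2" by simp
next
  fix a b c x y t :: real
  let ?k = "2 * (1 + \<bar>a\<bar>)"
  have kp: "?k > 0" by simp
  have "heis_d (x,y,t) (iL a b c (x,y,t)) / ?k \<le> heis_dist_set (x,y,t) (hline a b c)"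
    unfolding heis_dist_set_def
  proof (rule cInf_greatest)
    show "heis_d (x, y, t) ` hline a b c \<noteq> {}" by (auto simp: hline_def)
  next
    fix m assume "m \<in> heis_d (x, y, t) ` hline a b c"
    then obtain w where m: "m = heis_d (x,y,t) (a*w+b, w, (1/2)*b*w + c)"
      by (auto simp: hline_def)
    let ?u = "x - a*y - b" and ?h = "y - w"
    have "max \<bar>?u\<bar> (sqrt \<bar>t - c - b*y/2 + ?u*y/2\<bar>) \<le> ?k * m"
    proof (rule core[where h = ?h])
      have "x - a*w - b = ?u + a*?h" by (simp add: algebra_simps)
      then show "sqrt ((?u + a*?h)^2 + ?h^2) \<le> m" unfolding m dist_L by (metis max.cobounded1)
      have "t - c - b*y/2 + ?u*y/2 - ?h*?u/2 = t - c - b*y/2 + ?u*y/2 - (y-w)*?u/2" by simp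
      then show "sqrt \<bar>t - c - b*y/2 + ?u*y/2 - ?h*?u/2\<bar> \<le> m"
        unfolding m dist_L by (simp add: algebra_simps)
    qed
    then show "heis_d (x,y,t) (iL a b c (x,y,t)) / ?k \<le> m"
      unfolding dist_iL using kp by (simp add: divide_le_eq mult.commute)
  qed
  then show "heis_d (x,y,t) (iL a b c (x,y,t)) \<le> 2 * (1 + \<bar>a\<bar>) * heis_dist_set (x,y,t) (hline a b c)"
    using kp by (simp add: divide_le_eq mult.commute)
qed

end
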